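(* Let $V$ be a two-sided vector space of rank $n$ with simultaneous basis $y_1,\dots,y_n$, and let $A=(a_{ij})$ and $B=(b_{ij})$ be the $n\times n$ matrices of additive functions $K\to K$ defined by $y_i\alpha=\sum_j a_{ij}(\alpha)y_j$ and $\delta y_i=\sum_j y_jb_{ji}(\delta)$ for all $\alpha,\delta\in K$. Then $A^TB=BA^T=I_n$ in $M_n(F)$.
   Context: Let $k\subset K$ be fields. A two-sided vector space is a $K\otimes_kK$-module; left (resp. right) multiplication by $K$ is the action of $K\otimes1$ (resp. $1\otimes K$). Rank $n$ means dimension $n$ both as left and right $K$-vector space; a simultaneous basis is a basis for both actions. $F$ is the ring of additive functions $K\to K$ with pointwise addition and multiplication given by composition, so that in $M_n(F)$ the $(k,i)$ entry of $A^TB$ is the function $\delta\mapsto\sum_j a_{jk}(b_{ji}(\delta))$; $I_n$ is the identity matrix whose diagonal entries are the identity function. *)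

theory Defs
  imports Complex_Main
begin

definition is_subfield :: "'a::field set \<Rightarrow> bool" where
  "is_subfield k \<longleftrightarrow> 0 \<in> k \<and> 1 \<in> k \<and>
     (\<forall>x\<in>k. \<forall>y\<in>k. x + y \<in> k \<and> x - y \<in> k \<and> x * y \<in> k) \<and>
     (\<forall>x\<in>k. x \<noteq> 0 \<longrightarrow> inverse x \<in> k)"

text \<open>A two-sided vector space over K relative to k, i.e. a module over K tensor_k K:
  a left K-vector space (lmul) and a right K-vector space (rmul), whose actions
  commute and agree on k.\<close>
definition two_sided_space ::
  "'a::field set \<Rightarrow> ('a \<Rightarrow> 'v::ab_group_add \<Rightarrow> 'v) \<Rightarrow> ('v \<Rightarrow> 'a \<Rightarrow> 'v) \<Rightarrow> bool" where
  "two_sided_space k lmul rmul \<longleftrightarrow>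
     is_subfield k \<and>
     vector_space lmul \<and>
     vector_space (\<lambda>c v. rmul v c) \<and>
     (\<forall>a b x. rmul (lmul a x) b = lmul a (rmul x b)) \<and>
     (\<forall>c\<in>k. \<forall>x. lmul c x = rmul x c)"

definition simultaneous_basis ::
  "('a::field \<Rightarrow> 'v::ab_group_add \<Rightarrow> 'v) \<Rightarrow> ('v \<Rightarrow> 'a \<Rightarrow> 'v) \<Rightarrow> nat \<Rightarrow> (nat \<Rightarrow> 'v) \<Rightarrow> bool" where
  "simultaneous_basis lmul rmul n y \<longleftrightarrow>
     inj_on y {..<n} \<and>
     \<not> module.dependent lmul (y ` {..<n}) \<and>
     module.span lmul (y ` {..<n}) = UNIV \<and>
     \<not> module.dependent (\<lambda>c v. rmul v c) (y ` {..<n}) \<and>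
     module.span (\<lambda>c v. rmul v c) (y ` {..<n}) = UNIV"

end

theory Submission
  imports Defs
begin

lemma (in module) coord_unique:
  fixes n :: nat
  assumes inj: "inj_on y {..<n}" and ind: "\<not> dependent (y ` {..<n})"
    and eq: "(\<Sum>p<n. scale (c p) (y p)) = (\<Sum>p<n. scale (d p) (y p))"
    and p: "p < n"
  shows "c p = d p"
proof -
  define u where "u v = c (inv_into {..<n} y v) - d (inv_into {..<n} y v)" for v
  have "(\<Sum>v\<in>y ` {..<n}. scale (u v) v) = (\<Sum>q<n. scale (u (y q)) (y q))"
    by (rule sum.reindex[OF inj, unfolded comp_def])
  also have "\<dots> = (\<Sum>q<n. scale (c q) (y q) - scale (d q) (y q))"
    by (rule sum.cong) (auto simp: u_def inv_into_f_f[OF inj] scale_left_diff_distrib)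
  also have "\<dots> = 0" using eq by (simp add: sum_subtractf)
  finally have s0: "(\<Sum>v\<in>y ` {..<n}. scale (u v) v) = 0" .
  have "u (y p) = 0"
    by (rule independentD[OF ind _ _ s0]) (use p in auto)
  thus ?thesis using p by (simp add: u_def inv_into_f_f[OF inj])
qed

theorem proposition3p6:
  fixes k :: "'a::field set"
    and lmul :: "'a \<Rightarrow> 'v::ab_group_add \<Rightarrow> 'v"
    and rmul :: "'v \<Rightarrow> 'a \<Rightarrow> 'v"
    and n :: nat and y :: "nat \<Rightarrow> 'v"
    and a b :: "nat \<Rightarrow> nat \<Rightarrow> 'a \<Rightarrow> 'a"
  assumes V: "two_sided_space k lmul rmul"
    and basis: "simultaneous_basis lmul rmul n y"
    and A: "\<forall>i<n. \<forall>\<alpha>. rmul (y i) \<alpha> = (\<Sum>j<n. lmul (a i j \<alpha>) (y j))"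
    and B: "\<forall>i<n. \<forall>\<delta>. lmul \<delta> (y i) = (\<Sum>j<n. rmul (y j) (b j i \<delta>))"
  shows "(\<forall>p<n. \<forall>q<n. \<forall>\<delta>. (\<Sum>j<n. a j p (b j q \<delta>)) = (if p = q then \<delta> else 0))
       \<and> (\<forall>p<n. \<forall>q<n. \<forall>\<delta>. (\<Sum>j<n. b p j (a q j \<delta>)) = (if p = q then \<delta> else 0))"
proof -
  interpret L: vector_space lmul using V by (simp add: two_sided_space_def)
  interpret R: vector_space "\<lambda>c v. rmul v c" using V by (simp add: two_sided_space_def)
  have inj: "inj_on y {..<n}" and indL: "\<not> L.dependent (y ` {..<n})"
    and indR: "\<not> R.dependent (y ` {..<n})"
    using basis by (auto simp: simultaneous_basis_def)
  have 1: "(\<Sum>j<n. a j p (b j q \<delta>)) = (if p = q then \<delta> else 0)" if pq: "p < n" "q < n" for p q \<delta>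
  proof -
    have "(\<Sum>p<n. lmul (\<Sum>j<n. a j p (b j q \<delta>)) (y p)) = (\<Sum>j<n. \<Sum>p<n. lmul (a j p (b j q \<delta>)) (y p))"
      by (subst sum.swap) (simp add: L.scale_sum_left)
    also have "\<dots> = (\<Sum>j<n. rmul (y j) (b j q \<delta>))" using A by (intro sum.cong) auto
    also have "\<dots> = lmul \<delta> (y q)" using B pq by simp
    also have "\<dots> = (\<Sum>p<n. lmul (if p = q then \<delta> else 0) (y p))"
      using pq by (simp add: if_distrib[of "\<lambda>c. lmul c _"] sum.If_cases cong: if_cong)
    finally show ?thesis by (rule L.coord_unique[OF inj indL _ pq(1)])
  qed
  have 2: "(\<Sum>j<n. b p j (a q j \<delta>)) = (if p = q then \<delta> else 0)" if pq: "p < n" "q < n" for p q \<delta>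
  proof -
    have "(\<Sum>p<n. rmul (y p) (\<Sum>j<n. b p j (a q j \<delta>))) = (\<Sum>j<n. \<Sum>p<n. rmul (y p) (b p j (a q j \<delta>)))"
      by (subst sum.swap) (simp add: R.scale_sum_left)
    also have "\<dots> = (\<Sum>j<n. lmul (a q j \<delta>) (y j))" using B by (intro sum.cong) auto
    also have "\<dots> = rmul (y q) \<delta>" using A pq by simp
    also have "\<dots> = (\<Sum>p<n. rmul (y p) (if p = q then \<delta> else 0))"
      using pq by (simp add: if_distrib[of "\<lambda>c. rmul _ c"] sum.If_cases cong: if_cong)
    finally show ?thesis
      by (rule R.coord_unique[where c="\<lambda>p. \<Sum>j<n. b p j (a q j \<delta>)" and d="\<lambda>p. if p = q then \<delta> else 0", OF inj indR _ pq(1)])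
  qed
  show ?thesis using 1 2 by blast
qed

end
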